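(* Let $X_1,X_2,\ldots$ be i.i.d. with continuous distribution function, in the domain of attraction of a stable law of index $0<\alpha<2$, symmetric if $\alpha=1$, and let $d=d(n)\to\infty$ with $d/n\to0$. Then \[ \sum_{j=1}^n\bigl|X_j\bigl(I\{|X_j|\le\eta_{n,d}\}-I\{|X_j|\le\eta_{n,d}(j)\}\bigr)\bigr|=o_P(A_n). \]
   Context: Domain of attraction: there are $p,q\ge0$, $p+q=1$, $L$ slowly varying at $\infty$ with $P\{X_1>t\}/(L(t)t^{-\alpha})\to p$, $P\{X_1\le-t\}/(L(t)t^{-\alpha})\to q$. $H(t)=P\{|X_1|>t\}$, $H^{-1}$ its generalized inverse; $A_n^2=\frac{\alpha}{2-\alpha}(H^{-1}(d/n))^2d$. $\eta_{n,d}$ is the $d$-th largest among $|X_1|,\ldots,|X_n|$, and $\eta_{n,d}(j)$ is the $d$-th largest among $|X_1|,\ldots,|X_{j-1}|,|X_{j+1}|,\ldots,|X_n|$. *)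

theory Defs
  imports "HOL-Probability.Probability"
begin

definition slowly_varying :: "(real \<Rightarrow> real) \<Rightarrow> bool" where
  "slowly_varying L \<longleftrightarrow>
     eventually (\<lambda>x. L x > 0) at_top \<and>
     (\<forall>c>0. ((\<lambda>x. L (c * x) / L x) \<longlongrightarrow> 1) at_top)"

text \<open>The k-th largest element of a list of reals (k counted from 1).\<close>
definition kth_largest :: "nat \<Rightarrow> real list \<Rightarrow> real" where
  "kth_largest k xs = rev (sort xs) ! (k - 1)"

definition eta :: "(nat \<Rightarrow> 'a \<Rightarrow> real) \<Rightarrow> nat \<Rightarrow> nat \<Rightarrow> 'a \<Rightarrow> real" where
  "eta X n d \<omega> = kth_largest d (map (\<lambda>i. \<bar>X i \<omega>\<bar>) [1..<n+1])"

definition eta_del :: "(nat \<Rightarrow> 'a \<Rightarrow> real) \<Rightarrow> nat \<Rightarrow> nat \<Rightarrow> nat \<Rightarrow> 'a \<Rightarrow> real" where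
  "eta_del X n d j \<omega> = kth_largest d (map (\<lambda>i. \<bar>X i \<omega>\<bar>) (filter (\<lambda>i. i \<noteq> j) [1..<n+1]))"

definition tailH :: "'a measure \<Rightarrow> (nat \<Rightarrow> 'a \<Rightarrow> real) \<Rightarrow> real \<Rightarrow> real" where
  "tailH M X t = measure M {\<omega> \<in> space M. \<bar>X 1 \<omega>\<bar> > t}"

definition tailH_inv :: "'a measure \<Rightarrow> (nat \<Rightarrow> 'a \<Rightarrow> real) \<Rightarrow> real \<Rightarrow> real" where
  "tailH_inv M X s = Inf {t. tailH M X t \<le> s}"

definition A_norm :: "'a measure \<Rightarrow> (nat \<Rightarrow> 'a \<Rightarrow> real) \<Rightarrow> real \<Rightarrow> nat \<Rightarrow> nat \<Rightarrow> real" where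
  "A_norm M X \<alpha> d n = sqrt (\<alpha> / (2 - \<alpha>) * (tailH_inv M X (real d / real n))\<^sup>2 * real d)"

end

theory Submission
  imports Defs
begin


lemma kth_iff:
  assumes d1: "1 \<le> d" and dl: "d \<le> length xs" and up: "\<And>x y. P x \<Longrightarrow> x \<le> y \<Longrightarrow> P y"
  shows "P (kth_largest d xs) \<longleftrightarrow> d \<le> length (filter P xs)"
proof -
  define s where "s = sort xs"
  define n where "n = length xs"
  have ls: "length s = n" by (simp add: s_def n_def)
  have srt: "sorted s" by (simp add: s_def)
  have k: "kth_largest d xs = s ! (n - d)"
    unfolding kth_largest_def using d1 dl
    by (simp add: rev_nth s_def n_def Suc_diff_le)
  have c: "length (filter P xs) = card {i. i < n \<and> P (s ! i)}"
  proof -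
    have "length (filter P xs) = length (filter P s)"
      by (metis mset_filter mset_sort s_def size_mset)
    then show ?thesis by (simp add: length_filter_conv_card ls)
  qed
  show ?thesis
  proof
    assume "P (kth_largest d xs)"
    then have p: "P (s ! (n - d))" using k by simp
    have "{n-d..<n} \<subseteq> {i. i < n \<and> P (s ! i)}"
    proof
      fix i assume "i \<in> {n-d..<n}"
      then have "s ! (n-d) \<le> s ! i" using sorted_nth_mono[OF srt, of "n-d" i] ls by auto
      then show "i \<in> {i. i < n \<and> P (s ! i)}" using up[OF p] \<open>i \<in> {n-d..<n}\<close> by auto
    qed
    then have "card {n-d..<n} \<le> card {i. i < n \<and> P (s ! i)}"
      by (intro card_mono) auto
    then show "d \<le> length (filter P xs)" using c dl n_def by simp
  next
    assume h: "d \<le> length (filter P xs)"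
    show "P (kth_largest d xs)"
    proof (rule ccontr)
      assume np: "\<not> P (kth_largest d xs)"
      have "{i. i < n \<and> P (s ! i)} \<subseteq> {n-d<..<n}"
      proof
        fix i assume i: "i \<in> {i. i < n \<and> P (s ! i)}"
        have "n - d < i"
        proof (rule ccontr)
          assume "\<not> n - d < i"
          then have "s ! i \<le> s ! (n-d)" using sorted_nth_mono[OF srt, of i "n-d"] ls d1 dl n_def by auto
          then show False using up[of "s ! i" "s ! (n-d)"] i np k by auto
        qed
        then show "i \<in> {n-d<..<n}" using i by auto
      qed
      then have "card {i. i < n \<and> P (s ! i)} \<le> card {n-d<..<n}"
        by (intro card_mono) auto
      then show False using c h d1 dl n_def by simp
    qed
  qed
qed



lemma cnt_all:
  "length (filter P (map g [1..<n+1])) = card {i\<in>{1..n}. P (g i)}"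
proof -
  have "length (filter P (map g [1..<n+1])) = length (filter (P \<circ> g) [1..<n+1])"
    by (simp add: filter_map)
  also have "\<dots> = card ({x. (P \<circ> g) x} \<inter> set [1..<n+1])"
    by (rule distinct_length_filter) simp
  also have "({x. (P \<circ> g) x} \<inter> set [1..<n+1]) = {i\<in>{1..n}. P (g i)}" by auto
  finally show ?thesis .
qed

lemma cnt_del:
  "length (filter P (map g (filter (\<lambda>i. i \<noteq> j) [1..<n+1]))) = card {i\<in>{1..n}-{j}. P (g i)}"
proof -
  have "length (filter P (map g (filter (\<lambda>i. i \<noteq> j) [1..<n+1]))) = length (filter (P \<circ> g) (filter (\<lambda>i. i \<noteq> j) [1..<n+1]))"
    by (simp add: filter_map)
  also have "\<dots> = card ({x. (P \<circ> g) x} \<inter> set (filter (\<lambda>i. i \<noteq> j) [1..<n+1]))"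
    by (rule distinct_length_filter) simp
  also have "({x. (P \<circ> g) x} \<inter> set (filter (\<lambda>i. i \<noteq> j) [1..<n+1])) = {i\<in>{1..n}-{j}. P (g i)}" by auto
  finally show ?thesis .
qed

lemma len_del: "j \<in> {1..n} \<Longrightarrow> length (filter (\<lambda>i. i \<noteq> j) [1..<n+1]) = n - 1"
proof -
  assume j: "j \<in> {1..n}"
  have "length (filter (\<lambda>i. i \<noteq> j) [1..<n+1]) = card ({x. x \<noteq> j} \<inter> set [1..<n+1])"
    by (rule distinct_length_filter) simp
  also have "{x. x \<noteq> j} \<inter> set [1..<n+1] = {1..n} - {j}" by auto
  also have "card ({1..n} - {j}) = n - 1" using j by simp
  finally show ?thesis .
qed

lemma term_zero:
  fixes Y :: "nat \<Rightarrow> real"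
  assumes d1: "1 \<le> d" and dn: "d < n" and j: "j \<in> {1..n}"
    and ne: "\<bar>Y j\<bar> \<noteq> kth_largest d (map (\<lambda>i. \<bar>Y i\<bar>) [1..<n+1])"
  shows "\<bar>Y j * ((if \<bar>Y j\<bar> \<le> kth_largest d (map (\<lambda>i. \<bar>Y i\<bar>) [1..<n+1]) then 1 else 0)
                - (if \<bar>Y j\<bar> \<le> kth_largest d (map (\<lambda>i. \<bar>Y i\<bar>) (filter (\<lambda>i. i \<noteq> j) [1..<n+1])) then 1 else 0))\<bar> = 0"
proof -
  define E where "E = kth_largest d (map (\<lambda>i. \<bar>Y i\<bar>) [1..<n+1])"
  define Ej where "Ej = kth_largest d (map (\<lambda>i. \<bar>Y i\<bar>) (filter (\<lambda>i. i \<noteq> j) [1..<n+1]))"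
  define y where "y = \<bar>Y j\<bar>"
  have l1: "d \<le> length (map (\<lambda>i. \<bar>Y i\<bar>) [1..<n+1])" using dn by simp
  have l2: "d \<le> length (map (\<lambda>i. \<bar>Y i\<bar>) (filter (\<lambda>i. i \<noteq> j) [1..<n+1]))"
    using dn len_del[OF j] by simp
  have iffE: "\<And>P. (\<And>x y. P x \<Longrightarrow> x \<le> y \<Longrightarrow> P y) \<Longrightarrow> P E \<longleftrightarrow> d \<le> card {i\<in>{1..n}. P \<bar>Y i\<bar>}"
  proof -
    fix P :: "real \<Rightarrow> bool" assume up: "\<And>x y. P x \<Longrightarrow> x \<le> y \<Longrightarrow> P y"
    have "P E \<longleftrightarrow> d \<le> length (filter P (map (\<lambda>i. \<bar>Y i\<bar>) [1..<n+1]))"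
      unfolding E_def by (rule kth_iff[OF d1 l1 up])
    then show "P E \<longleftrightarrow> d \<le> card {i\<in>{1..n}. P \<bar>Y i\<bar>}" by (simp only: cnt_all)
  qed
  have iffEj: "\<And>P. (\<And>x y. P x \<Longrightarrow> x \<le> y \<Longrightarrow> P y) \<Longrightarrow> P Ej \<longleftrightarrow> d \<le> card {i\<in>{1..n}-{j}. P \<bar>Y i\<bar>}"
  proof -
    fix P :: "real \<Rightarrow> bool" assume up: "\<And>x y. P x \<Longrightarrow> x \<le> y \<Longrightarrow> P y"
    have "P Ej \<longleftrightarrow> d \<le> length (filter P (map (\<lambda>i. \<bar>Y i\<bar>) (filter (\<lambda>i. i \<noteq> j) [1..<n+1])))"
      unfolding Ej_def by (rule kth_iff[OF d1 l2 up])
    then show "P Ej \<longleftrightarrow> d \<le> card {i\<in>{1..n}-{j}. P \<bar>Y i\<bar>}" by (simp only: cnt_del)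
  qed
  have fin: "finite {i\<in>{1..n}. P \<bar>Y i\<bar>}" for P by simp
  consider "y > E" | "y < E" using ne unfolding E_def y_def by linarith
  then show ?thesis
  proof cases
    case 1
    have "\<not> y \<le> Ej"
    proof
      assume "y \<le> Ej"
      then have "d \<le> card {i\<in>{1..n}-{j}. y \<le> \<bar>Y i\<bar>}" using iffEj[of "\<lambda>x. y \<le> x"] by auto
      also have "\<dots> \<le> card {i\<in>{1..n}. y \<le> \<bar>Y i\<bar>}" by (intro card_mono) auto
      finally have "y \<le> E" using iffE[of "\<lambda>x. y \<le> x"] by auto
      then show False using 1 by simp
    qed
    then show ?thesis using 1 unfolding E_def[symmetric] Ej_def[symmetric] y_def[symmetric] by simp
  next
    case 2
    have "d \<le> card {i\<in>{1..n}. y < \<bar>Y i\<bar>}" using iffE[of "\<lambda>x. y < x"] 2 by auto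
    also have "{i\<in>{1..n}. y < \<bar>Y i\<bar>} \<subseteq> {i\<in>{1..n}-{j}. y \<le> \<bar>Y i\<bar>}" using y_def by auto
    then have "card {i\<in>{1..n}. y < \<bar>Y i\<bar>} \<le> card {i\<in>{1..n}-{j}. y \<le> \<bar>Y i\<bar>}" by (intro card_mono) auto
    finally have "y \<le> Ej" using iffEj[of "\<lambda>x. y \<le> x"] by auto
    then show ?thesis using 2 unfolding E_def[symmetric] Ej_def[symmetric] y_def[symmetric] by simp
  qed
qed

lemma det:
  fixes Y :: "nat \<Rightarrow> real"
  assumes d1: "1 \<le> d" and dn: "d < n" and inj: "inj_on (\<lambda>i. \<bar>Y i\<bar>) {1..n}" and t0: "0 \<le> t"
    and lt: "t < (\<Sum>j=1..n. \<bar>Y j * ((if \<bar>Y j\<bar> \<le> kth_largest d (map (\<lambda>i. \<bar>Y i\<bar>) [1..<n+1]) then 1 else 0)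
                - (if \<bar>Y j\<bar> \<le> kth_largest d (map (\<lambda>i. \<bar>Y i\<bar>) (filter (\<lambda>i. i \<noteq> j) [1..<n+1])) then 1 else 0))\<bar>)"
  shows "t < kth_largest d (map (\<lambda>i. \<bar>Y i\<bar>) [1..<n+1])"
proof -
  define E where "E = kth_largest d (map (\<lambda>i. \<bar>Y i\<bar>) [1..<n+1])"
  define tm where "tm j = \<bar>Y j * ((if \<bar>Y j\<bar> \<le> kth_largest d (map (\<lambda>i. \<bar>Y i\<bar>) [1..<n+1]) then 1 else 0)
                - (if \<bar>Y j\<bar> \<le> kth_largest d (map (\<lambda>i. \<bar>Y i\<bar>) (filter (\<lambda>i. i \<noteq> j) [1..<n+1])) then 1 else 0))\<bar>" for j
  have tz: "\<And>j. j \<in> {1..n} \<Longrightarrow> \<bar>Y j\<bar> \<noteq> E \<Longrightarrow> tm j = 0"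
    unfolding tm_def E_def using term_zero[OF d1 dn] by blast
  have tle: "tm j \<le> \<bar>Y j\<bar>" for j
    unfolding tm_def by (auto simp: abs_mult)
  have eq: "sum tm {1..n} = sum tm {j\<in>{1..n}. \<bar>Y j\<bar> = E}"
    by (rule sum.mono_neutral_right) (use tz in auto)
  have lt': "t < sum tm {1..n}" using lt unfolding tm_def by simp
  have ne: "{j\<in>{1..n}. \<bar>Y j\<bar> = E} \<noteq> {}"
  proof
    assume "{j\<in>{1..n}. \<bar>Y j\<bar> = E} = {}"
    then have "sum tm {1..n} = 0" using eq by (simp only: sum.empty)
    then show False using lt' t0 by simp
  qed
  then obtain j0 where j0: "j0 \<in> {1..n}" "\<bar>Y j0\<bar> = E" by auto
  have "{j\<in>{1..n}. \<bar>Y j\<bar> = E} = {j0}"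
  proof
    show "{j\<in>{1..n}. \<bar>Y j\<bar> = E} \<subseteq> {j0}"
    proof
      fix j assume "j \<in> {j\<in>{1..n}. \<bar>Y j\<bar> = E}"
      then have "j \<in> {1..n}" "\<bar>Y j\<bar> = \<bar>Y j0\<bar>" using j0 by auto
      then show "j \<in> {j0}" using inj_onD[OF inj _ _ j0(1)] by simp
    qed
    show "{j0} \<subseteq> {j\<in>{1..n}. \<bar>Y j\<bar> = E}" using j0 by simp
  qed
  then have "sum tm {1..n} = tm j0" using eq by simp
  then show ?thesis using lt' tle[of j0] j0 unfolding E_def by simp
qed



context prob_space begin

lemma point_zero:
  fixes Z :: "'a \<Rightarrow> real"
  assumes Zm: "Z \<in> borel_measurable M"
    and cont: "continuous_on UNIV (\<lambda>t. measure M {\<omega> \<in> space M. Z \<omega> \<le> t})"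
  shows "measure M {\<omega> \<in> space M. Z \<omega> = c} = 0"
proof -
  define F where "F t = measure M {\<omega> \<in> space M. Z \<omega> \<le> t}" for t
  define g where "g k = c - inverse (real (Suc k))" for k
  have gl: "g \<longlonglongrightarrow> c" unfolding g_def
    using tendsto_diff[OF tendsto_const LIMSEQ_inverse_real_of_nat, of c] by simp
  have Fl: "(\<lambda>k. F (g k)) \<longlonglongrightarrow> F c"
    using continuous_on_tendsto_compose[OF cont gl] unfolding F_def by simp
  have bound: "measure M {\<omega> \<in> space M. Z \<omega> = c} \<le> F c - F (g k)" for k
  proof -
    have gk: "g k < c" unfolding g_def by simp
    have "{\<omega> \<in> space M. Z \<omega> = c} \<subseteq> {\<omega> \<in> space M. Z \<omega> \<le> c} - {\<omega> \<in> space M. Z \<omega> \<le> g k}"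
      using gk by auto
    then have "measure M {\<omega> \<in> space M. Z \<omega> = c} \<le> measure M ({\<omega> \<in> space M. Z \<omega> \<le> c} - {\<omega> \<in> space M. Z \<omega> \<le> g k})"
      using Zm by (intro finite_measure_mono) auto
    also have "\<dots> = F c - F (g k)" unfolding F_def
      using Zm gk by (subst finite_measure_Diff) auto
    finally show ?thesis .
  qed
  have "(\<lambda>k. F c - F (g k)) \<longlonglongrightarrow> 0"
    using tendsto_diff[OF tendsto_const Fl, of "F c"] by simp
  then have "measure M {\<omega> \<in> space M. Z \<omega> = c} \<le> 0"
    using bound by (intro tendsto_lowerbound[of "\<lambda>k. F c - F (g k)"]) auto
  then show ?thesis by (simp add: measure_nonneg antisym)
qed

lemma tie_zero:
  fixes Z W :: "'a \<Rightarrow> real"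
  assumes ind: "indep_var borel Z borel W"
    and same: "distr M borel W = distr M borel Z"
    and pz: "\<And>c. measure M {\<omega> \<in> space M. Z \<omega> = c} = 0"
  shows "measure M {\<omega> \<in> space M. \<bar>Z \<omega>\<bar> = \<bar>W \<omega>\<bar>} = 0"
proof -
  have Zm: "Z \<in> borel_measurable M" and Wm: "W \<in> borel_measurable M"
    and J: "distr M borel Z \<Otimes>\<^sub>M distr M borel W = distr M (borel \<Otimes>\<^sub>M borel) (\<lambda>x. (Z x, W x))"
    using ind unfolding indep_var_distribution_eq by auto
  define \<mu> where "\<mu> = distr M borel Z"
  interpret mu: prob_space \<mu> unfolding \<mu>_def using Zm by (rule prob_space_distr)
  define D where "D = {p :: real \<times> real. \<bar>fst p\<bar> = \<bar>snd p\<bar>}"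
  have Dm: "D \<in> sets (borel \<Otimes>\<^sub>M borel)"
  proof -
    have "D = {p \<in> space (borel \<Otimes>\<^sub>M borel). \<bar>fst p\<bar> = \<bar>snd p\<bar>}" by (simp add: D_def space_pair_measure)
    also have "\<dots> \<in> sets (borel \<Otimes>\<^sub>M borel)" by measurable
    finally show ?thesis .
  qed
  have pt: "emeasure \<mu> {y. \<bar>y\<bar> = a} = 0" for a
  proof -
    have z: "emeasure \<mu> {c} = 0" for c
    proof -
      have "emeasure \<mu> {c} = emeasure M (Z -` {c} \<inter> space M)"
        unfolding \<mu>_def using Zm by (simp add: emeasure_distr)
      also have "Z -` {c} \<inter> space M = {\<omega> \<in> space M. Z \<omega> = c}" by auto
      also have "emeasure M \<dots> = ennreal (measure M {\<omega> \<in> space M. Z \<omega> = c})"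
        by (simp add: emeasure_eq_measure)
      finally show ?thesis using pz by simp
    qed
    have "{y. \<bar>y\<bar> = a} \<subseteq> {a, -a}" by auto
    then have "emeasure \<mu> {y. \<bar>y\<bar> = a} \<le> emeasure \<mu> {a, -a}"
      by (intro emeasure_mono) (auto simp: \<mu>_def)
    also have "\<dots> \<le> emeasure \<mu> {a} + emeasure \<mu> {-a}"
    proof -
      have "{a, -a} = {a} \<union> {-a}" by auto
      then show ?thesis using emeasure_subadditive[of "{a}" \<mu> "{-a}"] by (simp add: \<mu>_def)
    qed
    finally show ?thesis using z by simp
  qed
  have "emeasure (\<mu> \<Otimes>\<^sub>M \<mu>) D = (\<integral>\<^sup>+x. emeasure \<mu> (Pair x -` D) \<partial>\<mu>)"
    using Dm by (intro mu.emeasure_pair_measure_alt) (simp add: \<mu>_def)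
  also have "\<dots> = (\<integral>\<^sup>+x. 0 \<partial>\<mu>)"
  proof (rule nn_integral_cong)
    fix x
    have "Pair x -` D = {y. \<bar>y\<bar> = \<bar>x\<bar>}" by (auto simp: D_def)
    then show "emeasure \<mu> (Pair x -` D) = 0" using pt by simp
  qed
  finally have e0: "emeasure (\<mu> \<Otimes>\<^sub>M \<mu>) D = 0" by simp
  have "\<mu> \<Otimes>\<^sub>M \<mu> = distr M (borel \<Otimes>\<^sub>M borel) (\<lambda>x. (Z x, W x))"
    using J same unfolding \<mu>_def by simp
  then have "emeasure (distr M (borel \<Otimes>\<^sub>M borel) (\<lambda>x. (Z x, W x))) D = 0" using e0 by simp
  then have "emeasure M ((\<lambda>x. (Z x, W x)) -` D \<inter> space M) = 0"
    using Dm Zm Wm by (subst (asm) emeasure_distr) auto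
  moreover have "(\<lambda>x. (Z x, W x)) -` D \<inter> space M = {\<omega> \<in> space M. \<bar>Z \<omega>\<bar> = \<bar>W \<omega>\<bar>}"
    by (auto simp: D_def)
  ultimately show ?thesis by (simp add: measure_def)
qed

end


context prob_space begin

lemma same_tail:
  fixes X :: "nat \<Rightarrow> 'a \<Rightarrow> real"
  assumes meas: "\<And>i. i \<ge> 1 \<Longrightarrow> X i \<in> borel_measurable M"
    and same: "\<And>i. i \<ge> 1 \<Longrightarrow> distr M borel (X i) = distr M borel (X 1)"
    and i: "i \<ge> 1"
  shows "measure M {\<omega> \<in> space M. t < \<bar>X i \<omega>\<bar>} = measure M {\<omega> \<in> space M. t < \<bar>X 1 \<omega>\<bar>}"
proof -
  have S: "{x::real. t < \<bar>x\<bar>} \<in> sets borel" by measurable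
  have "measure M {\<omega> \<in> space M. t < \<bar>X i \<omega>\<bar>} = measure (distr M borel (X i)) {x. t < \<bar>x\<bar>}"
    using meas[OF i] S by (subst measure_distr) (auto intro!: arg_cong[where f="measure M"])
  also have "\<dots> = measure (distr M borel (X 1)) {x. t < \<bar>x\<bar>}" using same[OF i] by simp
  also have "\<dots> = measure M {\<omega> \<in> space M. t < \<bar>X 1 \<omega>\<bar>}"
    using meas[of 1] S by (subst measure_distr) (auto intro!: arg_cong[where f="measure M"])
  finally show ?thesis .
qed

lemma count_meas:
  fixes X :: "nat \<Rightarrow> 'a \<Rightarrow> real"
  assumes meas: "\<And>i. i \<ge> 1 \<Longrightarrow> X i \<in> borel_measurable M"
    and d: "d > 0"
  shows "{\<omega> \<in> space M. d \<le> card {i\<in>{1..n}. t < \<bar>X i \<omega>\<bar>}} \<in> sets M"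
proof -
  define A where "A i = {\<omega> \<in> space M. t < \<bar>X i \<omega>\<bar>}" for i
  define B where "B = {\<omega> \<in> space M. d \<le> card {i\<in>{1..n}. t < \<bar>X i \<omega>\<bar>}}"
  have Am: "A i \<in> sets M" if "i \<in> {1..n}" for i
  proof -
    have [measurable]: "X i \<in> borel_measurable M" using meas that by auto
    show ?thesis unfolding A_def by measurable
  qed
  have Bm: "B \<in> sets M"
  proof -
    have "B = space M \<inter> (\<Union>S\<in>{S. S \<subseteq> {1..n} \<and> d \<le> card S}. \<Inter>i\<in>{1..n}. (if i \<in> S then A i else space M - A i))"
    proof (intro set_eqI iffI)
      fix \<omega> assume w: "\<omega> \<in> B"
      let ?S = "{i\<in>{1..n}. t < \<bar>X i \<omega>\<bar>}"
      show "\<omega> \<in> space M \<inter> (\<Union>S\<in>{S. S \<subseteq> {1..n} \<and> d \<le> card S}. \<Inter>i\<in>{1..n}. (if i \<in> S then A i else space M - A i))"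
        using w unfolding B_def A_def by (intro IntI UN_I[of ?S]) auto
    next
      fix \<omega> assume w: "\<omega> \<in> space M \<inter> (\<Union>S\<in>{S. S \<subseteq> {1..n} \<and> d \<le> card S}. \<Inter>i\<in>{1..n}. (if i \<in> S then A i else space M - A i))"
      then obtain S where S: "S \<subseteq> {1..n}" "d \<le> card S" and
        inS: "\<And>i. i \<in> {1..n} \<Longrightarrow> \<omega> \<in> (if i \<in> S then A i else space M - A i)" and sp: "\<omega> \<in> space M" by auto
      have "S = {i\<in>{1..n}. t < \<bar>X i \<omega>\<bar>}"
      proof (intro set_eqI iffI)
        fix i assume "i \<in> S" then show "i \<in> {i\<in>{1..n}. t < \<bar>X i \<omega>\<bar>}" using S(1) inS[of i] by (auto simp: A_def)
      next
        fix i assume "i \<in> {i\<in>{1..n}. t < \<bar>X i \<omega>\<bar>}" then show "i \<in> S" using inS[of i] by (auto simp: A_def split: if_splits)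
      qed
      then show "\<omega> \<in> B" using S sp unfolding B_def by simp
    qed
    also have "\<dots> \<in> sets M"
      using Am d apply (intro sets.Int sets.top sets.finite_UN sets.finite_INT)
      apply (auto simp: finite_subset)
      apply (cases n)
       apply auto
      done
    finally show ?thesis .
  qed
  then show ?thesis unfolding B_def .
qed

lemma markov_count:
  fixes X :: "nat \<Rightarrow> 'a \<Rightarrow> real"
  assumes meas: "\<And>i. i \<ge> 1 \<Longrightarrow> X i \<in> borel_measurable M"
    and same: "\<And>i. i \<ge> 1 \<Longrightarrow> distr M borel (X i) = distr M borel (X 1)"
    and d: "d > 0"
  shows "measure M {\<omega> \<in> space M. d \<le> card {i\<in>{1..n}. t < \<bar>X i \<omega>\<bar>}}
           \<le> real n * measure M {\<omega> \<in> space M. t < \<bar>X 1 \<omega>\<bar>} / real d"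
proof -
  define A where "A i = {\<omega> \<in> space M. t < \<bar>X i \<omega>\<bar>}" for i
  define B where "B = {\<omega> \<in> space M. d \<le> card {i\<in>{1..n}. t < \<bar>X i \<omega>\<bar>}}"
  have Am: "A i \<in> sets M" if "i \<in> {1..n}" for i
  proof -
    have [measurable]: "X i \<in> borel_measurable M" using meas that by auto
    show ?thesis unfolding A_def by measurable
  qed
  have cs: "real (card {i\<in>{1..n}. t < \<bar>X i \<omega>\<bar>}) = (\<Sum>i\<in>{1..n}. indicator (A i) \<omega>)"
    if "\<omega> \<in> space M" for \<omega>
  proof -
    have "real (card {i\<in>{1..n}. t < \<bar>X i \<omega>\<bar>}) = (\<Sum>i\<in>{i\<in>{1..n}. t < \<bar>X i \<omega>\<bar>}. 1)"
      by simp
    also have "\<dots> = (\<Sum>i\<in>{1..n}. if t < \<bar>X i \<omega>\<bar> then 1 else 0)"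
      by (rule sum.inter_filter) simp
    also have "\<dots> = (\<Sum>i\<in>{1..n}. indicator (A i) \<omega>)"
      using that by (intro sum.cong) (auto simp: A_def indicator_def)
    finally show ?thesis .
  qed
  have pw: "indicator B \<omega> \<le> (1 / real d) * (\<Sum>i\<in>{1..n}. indicator (A i) \<omega>)"
    if "\<omega> \<in> space M" for \<omega> :: 'a
  proof (cases "\<omega> \<in> B")
    case True
    then have "real d \<le> real (card {i\<in>{1..n}. t < \<bar>X i \<omega>\<bar>})" unfolding B_def by simp
    then have "real d \<le> (\<Sum>i\<in>{1..n}. indicator (A i) \<omega>)" using cs[OF that] by simp
    then show ?thesis using True d by (simp add: field_simps)
  next
    case False
    have "0 \<le> (\<Sum>i\<in>{1..n}. indicator (A i) \<omega> :: real)" by (intro sum_nonneg) simp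
    then show ?thesis using False by simp
  qed
  have intA: "integrable M (indicator (A i) :: 'a \<Rightarrow> real)" if "i \<in> {1..n}" for i
    using Am[OF that] by (intro integrable_real_indicator) (auto simp: emeasure_eq_measure)
  have Bsub: "B \<subseteq> space M" unfolding B_def by auto
  have Bm: "B \<in> sets M"
  proof -
    have "B = space M \<inter> (\<Union>S\<in>{S. S \<subseteq> {1..n} \<and> d \<le> card S}. \<Inter>i\<in>{1..n}. (if i \<in> S then A i else space M - A i))"
    proof (intro set_eqI iffI)
      fix \<omega> assume w: "\<omega> \<in> B"
      let ?S = "{i\<in>{1..n}. t < \<bar>X i \<omega>\<bar>}"
      show "\<omega> \<in> space M \<inter> (\<Union>S\<in>{S. S \<subseteq> {1..n} \<and> d \<le> card S}. \<Inter>i\<in>{1..n}. (if i \<in> S then A i else space M - A i))"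
        using w unfolding B_def A_def by (intro IntI UN_I[of ?S]) auto
    next
      fix \<omega> assume w: "\<omega> \<in> space M \<inter> (\<Union>S\<in>{S. S \<subseteq> {1..n} \<and> d \<le> card S}. \<Inter>i\<in>{1..n}. (if i \<in> S then A i else space M - A i))"
      then obtain S where S: "S \<subseteq> {1..n}" "d \<le> card S" and
        inS: "\<And>i. i \<in> {1..n} \<Longrightarrow> \<omega> \<in> (if i \<in> S then A i else space M - A i)" and sp: "\<omega> \<in> space M" by auto
      have "S = {i\<in>{1..n}. t < \<bar>X i \<omega>\<bar>}"
      proof (intro set_eqI iffI)
        fix i assume "i \<in> S" then show "i \<in> {i\<in>{1..n}. t < \<bar>X i \<omega>\<bar>}" using S(1) inS[of i] by (auto simp: A_def)
      next
        fix i assume "i \<in> {i\<in>{1..n}. t < \<bar>X i \<omega>\<bar>}" then show "i \<in> S" using inS[of i] by (auto simp: A_def split: if_splits)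
      qed
      then show "\<omega> \<in> B" using S sp unfolding B_def by simp
    qed
    also have "\<dots> \<in> sets M"
      using Am d apply (intro sets.Int sets.top sets.finite_UN sets.finite_INT)
      apply (auto simp: finite_subset)
      apply (cases n)
       apply auto
      done
    finally show ?thesis .
  qed
  have intB: "integrable M (indicator B :: 'a \<Rightarrow> real)"
    using Bm by (intro integrable_real_indicator) (auto simp: emeasure_eq_measure)
  have "measure M B = (LINT \<omega>|M. indicator B \<omega>)" using Bsub by (simp add: Int_absorb2)
  also have "\<dots> \<le> (LINT \<omega>|M. (1 / real d) * (\<Sum>i\<in>{1..n}. indicator (A i) \<omega>))"
  proof (rule integral_mono[OF intB _ pw])
    show "integrable M (\<lambda>\<omega>. (1 / real d) * (\<Sum>i\<in>{1..n}. indicator (A i) \<omega>))"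
      using intA by (intro integrable_mult_right integrable_sum) auto
  qed
  also have "\<dots> = (1 / real d) * (\<Sum>i\<in>{1..n}. (LINT \<omega>|M. indicator (A i) \<omega>))"
    using intA by (simp add: integral_sum)
  also have "\<dots> = (1 / real d) * (\<Sum>i\<in>{1..n}. measure M (A 1))"
  proof -
    have "(LINT \<omega>|M. indicator (A i) \<omega>) = measure M (A 1)" if "i \<in> {1..n}" for i
    proof -
      have "(LINT \<omega>|M. indicator (A i) \<omega>) = measure M (A i)" by (simp add: A_def Int_absorb2)
      also have "\<dots> = measure M (A 1)" unfolding A_def using same_tail[of X i t, OF meas same] that by simp
      finally show ?thesis .
    qed
    then show ?thesis by simp
  qed
  also have "\<dots> = real n * measure M (A 1) / real d" by simp
  finally show ?thesis unfolding B_def A_def .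
qed

end


context prob_space begin

lemma H_split:
  fixes Z :: "'a \<Rightarrow> real"
  assumes Zm: "Z \<in> borel_measurable M"
    and cont: "continuous_on UNIV (\<lambda>t. measure M {\<omega> \<in> space M. Z \<omega> \<le> t})"
    and t: "0 \<le> t"
  shows "measure M {\<omega> \<in> space M. t < \<bar>Z \<omega>\<bar>}
         = measure M {\<omega> \<in> space M. Z \<omega> > t} + measure M {\<omega> \<in> space M. Z \<omega> \<le> -t}"
proof -
  have [measurable]: "Z \<in> borel_measurable M" by fact
  have e1: "{\<omega> \<in> space M. t < \<bar>Z \<omega>\<bar>} = {\<omega> \<in> space M. Z \<omega> > t} \<union> {\<omega> \<in> space M. Z \<omega> < -t}"
    using t by auto
  have m1: "measure M {\<omega> \<in> space M. t < \<bar>Z \<omega>\<bar>} = measure M {\<omega> \<in> space M. Z \<omega> > t} + measure M {\<omega> \<in> space M. Z \<omega> < -t}"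
    unfolding e1 using t by (intro finite_measure_Union) auto
  have e2: "{\<omega> \<in> space M. Z \<omega> \<le> -t} = {\<omega> \<in> space M. Z \<omega> < -t} \<union> {\<omega> \<in> space M. Z \<omega> = -t}"
    by auto
  have "measure M {\<omega> \<in> space M. Z \<omega> \<le> -t} = measure M {\<omega> \<in> space M. Z \<omega> < -t} + measure M {\<omega> \<in> space M. Z \<omega> = -t}"
    unfolding e2 by (intro finite_measure_Union) auto
  also have "measure M {\<omega> \<in> space M. Z \<omega> = -t} = 0" by (rule point_zero[OF Zm cont])
  finally show ?thesis using m1 by simp
qed

lemma H_anti:
  fixes Z :: "'a \<Rightarrow> real"
  assumes Zm: "Z \<in> borel_measurable M" and "s \<le> t"
  shows "measure M {\<omega> \<in> space M. t < \<bar>Z \<omega>\<bar>} \<le> measure M {\<omega> \<in> space M. s < \<bar>Z \<omega>\<bar>}"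
proof -
  have [measurable]: "Z \<in> borel_measurable M" by fact
  show ?thesis using assms(2) by (intro finite_measure_mono) auto
qed

lemma H_lim0:
  fixes Z :: "'a \<Rightarrow> real"
  assumes Zm: "Z \<in> borel_measurable M" and s: "0 < s"
  shows "\<exists>t. measure M {\<omega> \<in> space M. t < \<bar>Z \<omega>\<bar>} \<le> s"
proof -
  have [measurable]: "Z \<in> borel_measurable M" by fact
  define A where "A k = {\<omega> \<in> space M. real k < \<bar>Z \<omega>\<bar>}" for k :: nat
  have "(\<lambda>k. measure M (A k)) \<longlonglongrightarrow> measure M (\<Inter>k. A k)"
  proof (rule finite_Lim_measure_decseq)
    show "range A \<subseteq> sets M" unfolding A_def by auto
    show "decseq A" unfolding A_def decseq_def by auto
  qed
  moreover have "(\<Inter>k. A k) = {}"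
  proof -
    have "\<omega> \<notin> A (nat \<lceil>\<bar>Z \<omega>\<bar>\<rceil>)" for \<omega> unfolding A_def by (simp add: not_less real_nat_ceiling_ge)
    then show ?thesis by blast
  qed
  ultimately have "(\<lambda>k. measure M (A k)) \<longlonglongrightarrow> 0" by simp
  then have "eventually (\<lambda>k. measure M (A k) < s) sequentially"
    using s by (intro order_tendstoD(2)) auto
  then obtain k where "measure M (A k) < s" by (auto dest: eventually_happens)
  then show ?thesis unfolding A_def by (intro exI[of _ "real k"]) simp
qed

lemma RV_ratio:
  fixes Z :: "'a \<Rightarrow> real" and L :: "real \<Rightarrow> real"
  assumes Zm: "Z \<in> borel_measurable M"
    and cont: "continuous_on UNIV (\<lambda>t. measure M {\<omega> \<in> space M. Z \<omega> \<le> t})"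
    and pq: "p + q = 1"
    and lp: "((\<lambda>t. measure M {\<omega> \<in> space M. Z \<omega> > t} / (L t * t powr (-\<alpha>))) \<longlongrightarrow> p) at_top"
    and lq: "((\<lambda>t. measure M {\<omega> \<in> space M. Z \<omega> \<le> -t} / (L t * t powr (-\<alpha>))) \<longlongrightarrow> q) at_top"
  shows "((\<lambda>t. measure M {\<omega> \<in> space M. t < \<bar>Z \<omega>\<bar>} / (L t * t powr (-\<alpha>))) \<longlongrightarrow> 1) at_top"
proof -
  have "((\<lambda>t. measure M {\<omega> \<in> space M. Z \<omega> > t} / (L t * t powr (-\<alpha>))
        + measure M {\<omega> \<in> space M. Z \<omega> \<le> -t} / (L t * t powr (-\<alpha>))) \<longlongrightarrow> 1) at_top"
    using tendsto_add[OF lp lq] pq by simp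
  moreover have "eventually (\<lambda>t. measure M {\<omega> \<in> space M. Z \<omega> > t} / (L t * t powr (-\<alpha>))
        + measure M {\<omega> \<in> space M. Z \<omega> \<le> -t} / (L t * t powr (-\<alpha>))
        = measure M {\<omega> \<in> space M. t < \<bar>Z \<omega>\<bar>} / (L t * t powr (-\<alpha>))) at_top"
    using eventually_ge_at_top[of 0]
    by eventually_elim (simp add: H_split[OF Zm cont] add_divide_distrib)
  ultimately show ?thesis by (rule Lim_transform_eventually)
qed

lemma RV_K:
  fixes Z :: "'a \<Rightarrow> real" and L :: "real \<Rightarrow> real"
  assumes Zm: "Z \<in> borel_measurable M"
    and sv: "slowly_varying L"
    and r: "((\<lambda>t. measure M {\<omega> \<in> space M. t < \<bar>Z \<omega>\<bar>} / (L t * t powr (-\<alpha>))) \<longlongrightarrow> 1) at_top"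
    and K: "0 < K"
  shows "((\<lambda>t. measure M {\<omega> \<in> space M. K * t < \<bar>Z \<omega>\<bar>} / measure M {\<omega> \<in> space M. t < \<bar>Z \<omega>\<bar>})
           \<longlongrightarrow> K powr (-\<alpha>)) at_top"
proof -
  define H where "H t = measure M {\<omega> \<in> space M. t < \<bar>Z \<omega>\<bar>}" for t
  define g where "g t = L t * t powr (-\<alpha>)" for t
  have r': "((\<lambda>t. H t / g t) \<longlongrightarrow> 1) at_top" using r unfolding H_def g_def .
  have Lpos: "eventually (\<lambda>t. L t > 0) at_top" and Lr: "((\<lambda>x. L (K * x) / L x) \<longlongrightarrow> 1) at_top"
    using sv K unfolding slowly_varying_def by auto
  have Kf: "filterlim (\<lambda>t. K * t) at_top at_top"
    by (rule filterlim_tendsto_pos_mult_at_top[OF tendsto_const K filterlim_ident])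
  have a1: "((\<lambda>t. H (K * t) / g (K * t)) \<longlongrightarrow> 1) at_top"
    using filterlim_compose[OF r' Kf] by simp
  have a2: "((\<lambda>t. g t / H t) \<longlongrightarrow> 1) at_top"
    using tendsto_inverse[OF r'] by (simp add: inverse_eq_divide)
  have "((\<lambda>t. (H (K * t) / g (K * t)) * (L (K * t) / L t) * K powr (-\<alpha>) * (g t / H t)) \<longlongrightarrow> 1 * 1 * K powr (-\<alpha>) * 1) at_top"
    by (intro tendsto_mult a1 a2 Lr tendsto_const)
  moreover have "eventually (\<lambda>t. (H (K * t) / g (K * t)) * (L (K * t) / L t) * K powr (-\<alpha>) * (g t / H t)
      = H (K * t) / H t) at_top"
  proof -
    have Hpos: "eventually (\<lambda>t. H t / g t > 1/2) at_top"
      using r' by (intro order_tendstoD(1)) auto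
    have LKpos: "eventually (\<lambda>t. L (K * t) > 0) at_top"
      using filterlim_iff[THEN iffD1, OF Kf] Lpos by auto
    show ?thesis using Hpos LKpos Lpos eventually_gt_at_top[of 0]
    proof eventually_elim
      case (elim t)
      have gt: "g t \<noteq> 0" using elim by auto
      have Ht: "H t \<noteq> 0" using elim by auto
      have gKt: "g (K * t) = L (K * t) * K powr (-\<alpha>) * t powr (-\<alpha>)"
        unfolding g_def using K elim by (simp add: powr_mult)
      have p1: "K powr (-\<alpha>) > 0" "t powr (-\<alpha>) > 0" using K elim by auto
      show ?case using gt Ht elim p1 unfolding gKt by (simp add: g_def field_simps)
    qed
  qed
  ultimately show ?thesis unfolding H_def[symmetric] by (simp add: Lim_transform_eventually)
qed

end


theorem lemma4p3:
  fixes M :: "'a measure" and X :: "nat \<Rightarrow> 'a \<Rightarrow> real"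
    and \<alpha> :: real and d :: "nat \<Rightarrow> nat"
  assumes "prob_space M"
    and "\<And>i. i \<ge> 1 \<Longrightarrow> X i \<in> borel_measurable M"
    and "prob_space.indep_vars M (\<lambda>_. borel) X {1..}"
    and "\<And>i. i \<ge> 1 \<Longrightarrow> distr M borel (X i) = distr M borel (X 1)"
    and "continuous_on UNIV (\<lambda>t. measure M {\<omega> \<in> space M. X 1 \<omega> \<le> t})"
    and "0 < \<alpha>" and "\<alpha> < 2"
    and "\<exists>p q L. p \<ge> 0 \<and> q \<ge> 0 \<and> p + q = 1 \<and> slowly_varying L \<and>
           ((\<lambda>t. measure M {\<omega> \<in> space M. X 1 \<omega> > t} / (L t * t powr (-\<alpha>))) \<longlongrightarrow> p) at_top \<and>
           ((\<lambda>t. measure M {\<omega> \<in> space M. X 1 \<omega> \<le> -t} / (L t * t powr (-\<alpha>))) \<longlongrightarrow> q) at_top \<and>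
           (\<alpha> = 1 \<longrightarrow> p = q)"
    and "filterlim d at_top sequentially"
    and "(\<lambda>n. real (d n) / real n) \<longlonglongrightarrow> 0"
  shows "\<forall>\<epsilon>>0. (\<lambda>n. measure M {\<omega> \<in> space M.
            (\<Sum>j=1..n. \<bar>X j \<omega> * ((if \<bar>X j \<omega>\<bar> \<le> eta X n (d n) \<omega> then 1 else 0)
                                  - (if \<bar>X j \<omega>\<bar> \<le> eta_del X n (d n) j \<omega> then 1 else 0))\<bar>)
              > \<epsilon> * A_norm M X \<alpha> (d n) n}) \<longlonglongrightarrow> 0"
proof (intro allI impI)
  fix \<epsilon> :: real assume \<epsilon>: "\<epsilon> > 0"
  note ps = assms(1) and meas = assms(2) and ind = assms(3) and same = assms(4) and cont = assms(5)
    and a0 = assms(6) and a2 = assms(7) and dlim = assms(9) and dn0 = assms(10)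
  interpret prob_space M by (rule ps)
  obtain p q L where pq: "p + q = 1" and sv: "slowly_varying L"
    and lp: "((\<lambda>t. measure M {\<omega> \<in> space M. X 1 \<omega> > t} / (L t * t powr (-\<alpha>))) \<longlongrightarrow> p) at_top"
    and lq: "((\<lambda>t. measure M {\<omega> \<in> space M. X 1 \<omega> \<le> -t} / (L t * t powr (-\<alpha>))) \<longlongrightarrow> q) at_top"
    using assms(8) by blast
  have Zm[measurable]: "X 1 \<in> borel_measurable M" using meas by simp
  define H where "H t = measure M {\<omega> \<in> space M. t < \<bar>X 1 \<omega>\<bar>}" for t
  have Hdef: "tailH M X t = H t" for t unfolding tailH_def H_def by simp
  have r: "((\<lambda>t. H t / (L t * t powr (-\<alpha>))) \<longlongrightarrow> 1) at_top"
    unfolding H_def by (rule RV_ratio[OF Zm cont pq lp lq])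
  have Hanti: "s \<le> t \<Longrightarrow> H t \<le> H s" for s t unfolding H_def by (rule H_anti[OF Zm])
  have Hpos: "H x > 0" for x
  proof -
    have "eventually (\<lambda>t. H t / (L t * t powr (-\<alpha>)) > 1/2) at_top"
      using r by (intro order_tendstoD(1)) auto
    then obtain t0 where t0: "\<And>t. t \<ge> t0 \<Longrightarrow> H t / (L t * t powr (-\<alpha>)) > 1/2"
      by (auto simp: eventually_at_top_linorder)
    have "H (max x t0) \<noteq> 0" using t0[of "max x t0"] by auto
    moreover have "H (max x t0) \<ge> 0" unfolding H_def by simp
    ultimately have "H (max x t0) > 0" by simp
    then show ?thesis using Hanti[of x "max x t0"] by simp
  qed
  have Hneg: "t < 0 \<Longrightarrow> H t = 1" for t
  proof -
    assume "t < 0"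
    then have "{\<omega> \<in> space M. t < \<bar>X 1 \<omega>\<bar>} = space M" by auto
    then show "H t = 1" unfolding H_def by (simp add: prob_space)
  qed
  have Hle1: "H t \<le> 1" for t unfolding H_def by simp
  have pz: "measure M {\<omega> \<in> space M. X i \<omega> = c} = 0" if i: "i \<ge> 1" for i c
  proof -
    have m: "X i \<in> borel_measurable M" using meas i by simp
    have "measure M {\<omega> \<in> space M. X i \<omega> = c} = measure (distr M borel (X i)) {c}"
      using m by (subst measure_distr) (auto intro!: arg_cong[where f="measure M"])
    also have "\<dots> = measure (distr M borel (X 1)) {c}" using same[OF i] by simp
    also have "\<dots> = measure M {\<omega> \<in> space M. X 1 \<omega> = c}"
      by (subst measure_distr[OF Zm]) (auto intro!: arg_cong[where f="measure M"])
    also have "\<dots> = 0" by (rule point_zero[OF Zm cont])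
    finally show ?thesis .
  qed
  have tie: "measure M {\<omega> \<in> space M. \<bar>X i \<omega>\<bar> = \<bar>X j \<omega>\<bar>} = 0"
    if ij: "i \<ge> 1" "j \<ge> 1" "i \<noteq> j" for i j
  proof -
    have sub: "insert i {j} \<subseteq> {1..}" using ij by auto
    have iv0: "indep_vars (\<lambda>_. borel) X (insert i {j})" by (rule indep_vars_subset[OF ind sub])
    have iv1: "indep_var borel (X i) borel (\<lambda>\<omega>. \<Sum>i\<in>{j}. X i \<omega>)"
      by (rule indep_vars_sum[OF _ _ iv0]) (use ij in auto)
    have eqf: "(\<lambda>\<omega>. \<Sum>i\<in>{j}. X i \<omega>) = X j" by (rule ext) simp
    have iv: "indep_var borel (X i) borel (X j)" using iv1 unfolding eqf .
    have "distr M borel (X j) = distr M borel (X i)" using same[OF ij(1)] same[OF ij(2)] by simp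
    then show ?thesis by (rule tie_zero[OF iv _ pz[OF ij(1)]])
  qed
  show "(\<lambda>n. measure M {\<omega> \<in> space M.
            (\<Sum>j=1..n. \<bar>X j \<omega> * ((if \<bar>X j \<omega>\<bar> \<le> eta X n (d n) \<omega> then 1 else 0)
                                  - (if \<bar>X j \<omega>\<bar> \<le> eta_del X n (d n) j \<omega> then 1 else 0))\<bar>)
              > \<epsilon> * A_norm M X \<alpha> (d n) n}) \<longlonglongrightarrow> 0"
  proof (rule order_tendstoI)
    fix a :: real assume a: "a < 0"
    show "eventually (\<lambda>n. a < measure M {\<omega> \<in> space M.
            (\<Sum>j=1..n. \<bar>X j \<omega> * ((if \<bar>X j \<omega>\<bar> \<le> eta X n (d n) \<omega> then 1 else 0)
                                  - (if \<bar>X j \<omega>\<bar> \<le> eta_del X n (d n) j \<omega> then 1 else 0))\<bar>)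
              > \<epsilon> * A_norm M X \<alpha> (d n) n}) sequentially"
      by (intro always_eventually allI less_le_trans[OF a measure_nonneg])
  next
    fix e :: real assume e: "0 < e"
    define Ev where "Ev n = {\<omega> \<in> space M.
            (\<Sum>j=1..n. \<bar>X j \<omega> * ((if \<bar>X j \<omega>\<bar> \<le> eta X n (d n) \<omega> then 1 else 0)
                                  - (if \<bar>X j \<omega>\<bar> \<le> eta_del X n (d n) j \<omega> then 1 else 0))\<bar>)
              > \<epsilon> * A_norm M X \<alpha> (d n) n}" for n
    have "((\<lambda>K. K powr (-\<alpha>)) \<longlongrightarrow> 0) at_top"
      by (rule tendsto_neg_powr[OF _ filterlim_ident]) (use a0 in simp)
    then have "eventually (\<lambda>K. K powr (-\<alpha>) < e/2) at_top"
      using e by (intro order_tendstoD(2)) auto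
    then obtain N where N: "\<And>K. K \<ge> N \<Longrightarrow> K powr (-\<alpha>) < e/2"
      by (auto simp: eventually_at_top_linorder)
    define K where "K = max N 1"
    have K0: "K > 0" and KN: "K powr (-\<alpha>) < e/2" using N[of K] by (auto simp: K_def)
    define \<delta> where "\<delta> = e/4"
    have "((\<lambda>t. H (K * t) / H t) \<longlongrightarrow> K powr (-\<alpha>)) at_top"
      unfolding H_def by (rule RV_K[OF Zm sv _ K0]) (use r in \<open>simp add: H_def\<close>)
    then have "eventually (\<lambda>t. H (K * t) / H t < K powr (-\<alpha>) + \<delta>) at_top"
      using e by (intro order_tendstoD(2)) (auto simp: \<delta>_def)
    then obtain R where R: "\<And>t. t \<ge> R \<Longrightarrow> H (K * t) / H t < K powr (-\<alpha>) + \<delta>"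
      by (auto simp: eventually_at_top_linorder)
    have HK: "H (K * t) \<le> (K powr (-\<alpha>) + \<delta>) * H t" if "t \<ge> R" for t
      using R[OF that] Hpos[of t] by (simp add: divide_less_eq)
    define R0 where "R0 = max R 1"
    define c where "c = \<epsilon> * sqrt (\<alpha> / (2 - \<alpha>))"
    have c0: "c > 0" unfolding c_def using \<epsilon> a0 a2 by simp
    have ev1: "eventually (\<lambda>n. 1 \<le> d n) sequentially"
      using dlim by (simp add: filterlim_at_top)
    have rd: "filterlim (\<lambda>n. real (d n)) at_top sequentially"
      by (rule filterlim_compose[OF filterlim_real_sequentially dlim])
    have ev2: "eventually (\<lambda>n. (2 * K / c)\<^sup>2 \<le> real (d n)) sequentially"
      using rd by (simp add: filterlim_at_top)
    have ev3: "eventually (\<lambda>n. real (d n) / real n < min 1 (H R0)) sequentially"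
      using dn0 Hpos[of R0] by (intro order_tendstoD(2)) auto
    have ev4: "eventually (\<lambda>n. 1 \<le> n) sequentially" by (rule eventually_ge_at_top)
    have "eventually (\<lambda>n. measure M (Ev n) < e) sequentially"
      using ev1 ev2 ev3 ev4
    proof eventually_elim
      case (elim n)
      define dd where "dd = d n"
      define s where "s = real dd / real n"
      have d1: "1 \<le> dd" and n1: "1 \<le> n" using elim by (auto simp: dd_def)
      have s0: "0 < s" using d1 n1 by (simp add: s_def)
      have s1: "s < 1" and sH: "s < H R0" using elim by (auto simp: s_def dd_def)
      have ddn: "dd < n"
      proof -
        have "real dd < real n" using s1 n1 by (simp add: s_def divide_less_eq)
        then show ?thesis by simp
      qed
      define S where "S = {t. H t \<le> s}"
      define T where "T = Inf S"
      have Tdef: "tailH_inv M X s = T" unfolding tailH_inv_def T_def S_def Hdef ..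
      obtain t0 where "measure M {\<omega> \<in> space M. t0 < \<bar>X 1 \<omega>\<bar>} \<le> s"
        using H_lim0[OF Zm s0] by blast
      then have Sne: "S \<noteq> {}" unfolding S_def H_def by auto
      have Sge0: "0 \<le> t" if "t \<in> S" for t
      proof (rule ccontr)
        assume "\<not> 0 \<le> t"
        then have "H t = 1" using Hneg by simp
        then show False using that s1 by (simp add: S_def)
      qed
      have Sbdd: "bdd_below S" using Sge0 by (intro bdd_belowI) auto
      have TR0: "R0 \<le> T" unfolding T_def
      proof (rule cInf_greatest[OF Sne])
        fix t assume t: "t \<in> S"
        show "R0 \<le> t"
        proof (rule ccontr)
          assume "\<not> R0 \<le> t"
          then have "H R0 \<le> H t" using Hanti[of t R0] by simp
          then show False using t sH by (simp add: S_def)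
        qed
      qed
      have T1: "1 \<le> T" and TR: "R \<le> T" using TR0 by (auto simp: R0_def)
      have "T < 2 * T" using T1 by simp
      then obtain t' where t'S: "t' \<in> S" and t'2: "t' < 2 * T"
        using cInf_less_iff[OF Sne Sbdd] unfolding T_def by blast
      have t'T: "T \<le> t'" unfolding T_def by (rule cInf_lower[OF t'S Sbdd])
      have Ht': "H t' \<le> s" using t'S by (simp add: S_def)
      define tn where "tn = \<epsilon> * A_norm M X \<alpha> dd n"
      have sqa: "sqrt (\<alpha> / (2 - \<alpha>) * T\<^sup>2 * real dd) = sqrt (\<alpha> / (2 - \<alpha>)) * T * sqrt (real dd)"
      proof -
        have "sqrt (\<alpha> / (2 - \<alpha>) * T\<^sup>2 * real dd) = sqrt (\<alpha> / (2 - \<alpha>)) * sqrt (T\<^sup>2) * sqrt (real dd)"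
          by (simp only: real_sqrt_mult)
        also have "sqrt (T\<^sup>2) = T" using T1 by simp
        finally show ?thesis .
      qed
      have tn_eq: "tn = c * sqrt (real dd) * T"
        unfolding tn_def A_norm_def Tdef[unfolded s_def] sqa c_def by simp
      have sq: "2 * K / c \<le> sqrt (real dd)"
        by (rule real_le_rsqrt) (use elim in \<open>simp add: dd_def\<close>)
      have csq: "2 * K \<le> c * sqrt (real dd)" using sq c0 by (simp add: field_simps)
      have tn_ge: "2 * K * T \<le> tn" unfolding tn_eq
        by (rule mult_right_mono[OF csq]) (use T1 in simp)
      have "0 \<le> 2 * K * T" using K0 T1 by simp
      then have tn0: "0 \<le> tn" using tn_ge by linarith
      have "K * t' \<le> K * (2 * T)" using t'2 K0 by (intro mult_left_mono) auto
      moreover have "K * (2 * T) = 2 * K * T" by simp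
      ultimately have Kt': "K * t' \<le> tn" using tn_ge by linarith
      have Htn: "H tn \<le> (K powr (-\<alpha>) + \<delta>) * s"
      proof -
        have "H tn \<le> H (K * t')" by (rule Hanti[OF Kt'])
        also have "\<dots> \<le> (K powr (-\<alpha>) + \<delta>) * H t'" by (rule HK) (use t'T TR in simp)
        also have "\<dots> \<le> (K powr (-\<alpha>) + \<delta>) * s"
          using Ht' e by (intro mult_left_mono) (auto simp: \<delta>_def)
        finally show ?thesis .
      qed
      define B where "B = {\<omega> \<in> space M. dd \<le> card {i\<in>{1..n}. tn < \<bar>X i \<omega>\<bar>}}"
      define P where "P = {(i, j). i \<in> {1..n} \<and> j \<in> {1..n} \<and> i \<noteq> j}"
      define Tie where "Tie p = {\<omega> \<in> space M. \<bar>X (fst p) \<omega>\<bar> = \<bar>X (snd p) \<omega>\<bar>}" for p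
      have Pfin: "finite P" by (rule finite_subset[of _ "{1..n} \<times> {1..n}"]) (auto simp: P_def)
      have Tiem: "Tie p \<in> sets M" if "p \<in> P" for p
      proof -
        have [measurable]: "X (fst p) \<in> borel_measurable M" "X (snd p) \<in> borel_measurable M"
          using that meas by (auto simp: P_def)
        show ?thesis unfolding Tie_def by measurable
      qed
      have Bm: "B \<in> sets M" unfolding B_def by (rule count_meas[of X, OF meas]) (use d1 in auto)
      have sub: "Ev n \<subseteq> B \<union> (\<Union>p\<in>P. Tie p)"
      proof
        fix \<omega> assume w: "\<omega> \<in> Ev n"
        show "\<omega> \<in> B \<union> (\<Union>p\<in>P. Tie p)"
        proof (cases "\<omega> \<in> (\<Union>p\<in>P. Tie p)")
          case True then show ?thesis by simp
        next
          case False
          have sp: "\<omega> \<in> space M" using w by (simp add: Ev_def)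
          have inj: "inj_on (\<lambda>i. \<bar>X i \<omega>\<bar>) {1..n}"
          proof (rule inj_onI, rule ccontr)
            fix i j assume "i \<in> {1..n}" "j \<in> {1..n}" "\<bar>X i \<omega>\<bar> = \<bar>X j \<omega>\<bar>" "i \<noteq> j"
            then have "\<omega> \<in> Tie (i, j)" "(i, j) \<in> P" using sp by (auto simp: Tie_def P_def)
            then show False using False by blast
          qed
          have lt: "tn < (\<Sum>j=1..n. \<bar>X j \<omega> * ((if \<bar>X j \<omega>\<bar> \<le> kth_largest dd (map (\<lambda>i. \<bar>X i \<omega>\<bar>) [1..<n+1]) then 1 else 0)
                - (if \<bar>X j \<omega>\<bar> \<le> kth_largest dd (map (\<lambda>i. \<bar>X i \<omega>\<bar>) (filter (\<lambda>i. i \<noteq> j) [1..<n+1])) then 1 else 0))\<bar>)"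
            using w unfolding Ev_def eta_def eta_del_def tn_def dd_def by blast
          have "tn < kth_largest dd (map (\<lambda>i. \<bar>X i \<omega>\<bar>) [1..<n+1])"
            by (rule det[OF d1 ddn inj tn0 lt])
          moreover have "dd \<le> length (map (\<lambda>i. \<bar>X i \<omega>\<bar>) [1..<n+1])" using ddn by simp
          ultimately have "dd \<le> length (filter (\<lambda>x. tn < x) (map (\<lambda>i. \<bar>X i \<omega>\<bar>) [1..<n+1]))"
            using kth_iff[OF d1, of "map (\<lambda>i. \<bar>X i \<omega>\<bar>) [1..<n+1]" "\<lambda>x. tn < x"] by auto
          then have "\<omega> \<in> B" unfolding B_def cnt_all using sp by simp
          then show ?thesis by simp
        qed
      qed
      have UTm: "(\<Union>p\<in>P. Tie p) \<in> sets M" using Tiem Pfin by auto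
      have mT: "measure M (\<Union>p\<in>P. Tie p) \<le> 0"
      proof -
        have "measure M (\<Union>p\<in>P. Tie p) \<le> (\<Sum>p\<in>P. measure M (Tie p))"
          using Pfin Tiem by (intro finite_measure_subadditive_finite) auto
        also have "\<dots> = 0"
        proof (rule sum.neutral, rule ballI)
          fix p assume "p \<in> P"
          then show "measure M (Tie p) = 0" unfolding Tie_def using tie by (auto simp: P_def)
        qed
        finally show ?thesis .
      qed
      have mB: "measure M B \<le> real n * H tn / real dd"
        using markov_count[of X dd n tn, OF meas same] d1 unfolding B_def H_def by linarith
      have "measure M (Ev n) \<le> measure M (B \<union> (\<Union>p\<in>P. Tie p))"
        by (rule finite_measure_mono[OF sub]) (use Bm UTm in auto)
      also have "\<dots> \<le> measure M B + measure M (\<Union>p\<in>P. Tie p)"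
        using Bm UTm by (intro measure_subadditive) auto
      also have "\<dots> \<le> real n * H tn / real dd" using mB mT by simp
      also have "\<dots> \<le> real n * ((K powr (-\<alpha>) + \<delta>) * s) / real dd"
        using Htn n1 d1 by (intro divide_right_mono mult_left_mono) auto
      also have "\<dots> = K powr (-\<alpha>) + \<delta>" using n1 d1 by (simp add: s_def)
      also have "\<dots> < e" using KN e unfolding \<delta>_def by linarith
      finally show ?case .
    qed
    then show "eventually (\<lambda>n. measure M {\<omega> \<in> space M.
            (\<Sum>j=1..n. \<bar>X j \<omega> * ((if \<bar>X j \<omega>\<bar> \<le> eta X n (d n) \<omega> then 1 else 0)
                                  - (if \<bar>X j \<omega>\<bar> \<le> eta_del X n (d n) j \<omega> then 1 else 0))\<bar>)
              > \<epsilon> * A_norm M X \<alpha> (d n) n} < e) sequentially"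
      unfolding Ev_def .
  qed
qed

end
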